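(* Let $\Gamma$ be a green Veldkamp quadrangle with point set $P$, and let $a,b\in P$ with ${\rm dist}(a,b)=4$ such that $a$ and $b$ are not opposite. Then $a^{\rm op}=b^{\rm op}$ and $\Gamma_2(a)=\Gamma_2(b)$.
   Context: A graph is a pair $(V,E)$ with $E$ a set of $2$-element subsets of $V$; $\Gamma_v$ is the set of neighbors of $v$; $\Gamma_m(v)=\{u\mid {\rm dist}(u,v)=m\}$. An $s$-path is a sequence $(x_0,\dots,x_s)$ of vertices with consecutive vertices adjacent and $x_{i-2}\ne x_i$ for $i\in[2,s]$. A closed $s$-path is an $s$-path with $s\ge3$ whose first and last vertices coincide; an $s$-circuit is the subgraph determined by a closed $s$-path. An opposition relation on a set $X$ is a symmetric anti-reflexive relation; trivial if any two distinct elements are related; $k$-plump if for every $S\subseteq X$ with $|S|\le k$ some element of $X$ is related to all elements of $S$. A Veldkamp graph is a graph with a $2$-plump opposition relation $\equiv_v$ on $\Gamma_v$ for each vertex $v$. A path $(v_0,\dots,v_s)$ is straight if $v_{i-1}\equiv_{v_i}v_{i+1}$ for all $i\in[1,s-1]$; a circuit is straight if every path in it is straight. A Veldkamp $n$-gon ($n\ge2$) is a Veldkamp graph satisfying (VP1) connected and bipartite; (VP2) for each $k\in[1,n-1]$ each straight $k$-path is the unique straight path between its endpoints of length at most $k$; (VP3) every straight $(n+1)$-path lies in a straight $2n$-circuit. A root is a straight $n$-path; two vertices are opposite if there is a root between them; $x^{\rm op}$ is the set of vertices opposite $x$. A Veldkamp quadrangle is a Veldkamp $4$-gon, with bipartition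 classes called points $P$ and lines $L$; it is green if $\equiv_x$ is trivial for every line $x$. *)

theory Defs
  imports Main
begin

(* A graph on vertex set V given by a symmetric irreflexive adjacency relation
   (equivalently, E = {{u,v}. adj u v} is a set of 2-element subsets of V). *)
definition graph :: "'v set \<Rightarrow> ('v \<Rightarrow> 'v \<Rightarrow> bool) \<Rightarrow> bool" where
  "graph V adj \<longleftrightarrow> (\<forall>u v. adj u v \<longrightarrow> u \<in> V \<and> v \<in> V \<and> u \<noteq> v \<and> adj v u)"

definition nbhd :: "('v \<Rightarrow> 'v \<Rightarrow> bool) \<Rightarrow> 'v \<Rightarrow> 'v set" where
  "nbhd adj v = {u. adj v u}"

definition opposition_rel :: "'a set \<Rightarrow> ('a \<Rightarrow> 'a \<Rightarrow> bool) \<Rightarrow> bool" where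
  "opposition_rel X R \<longleftrightarrow> (\<forall>x y. R x y \<longrightarrow> x \<in> X \<and> y \<in> X) \<and> (\<forall>x y. R x y \<longrightarrow> R y x) \<and> (\<forall>x. \<not> R x x)"

definition trivial_rel :: "'a set \<Rightarrow> ('a \<Rightarrow> 'a \<Rightarrow> bool) \<Rightarrow> bool" where
  "trivial_rel X R \<longleftrightarrow> (\<forall>x\<in>X. \<forall>y\<in>X. x \<noteq> y \<longrightarrow> R x y)"

definition plump :: "nat \<Rightarrow> 'a set \<Rightarrow> ('a \<Rightarrow> 'a \<Rightarrow> bool) \<Rightarrow> bool" where
  "plump k X R \<longleftrightarrow> (\<forall>S. S \<subseteq> X \<and> finite S \<and> card S \<le> k \<longrightarrow> (\<exists>x\<in>X. \<forall>s\<in>S. R x s))"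

(* opp v x y  means  x \<equiv>_v y *)
definition veldkamp_graph :: "'v set \<Rightarrow> ('v \<Rightarrow> 'v \<Rightarrow> bool) \<Rightarrow> ('v \<Rightarrow> 'v \<Rightarrow> 'v \<Rightarrow> bool) \<Rightarrow> bool" where
  "veldkamp_graph V adj opp \<longleftrightarrow> graph V adj \<and>
     (\<forall>v\<in>V. opposition_rel (nbhd adj v) (opp v) \<and> plump 2 (nbhd adj v) (opp v))"

definition is_path :: "'v set \<Rightarrow> ('v \<Rightarrow> 'v \<Rightarrow> bool) \<Rightarrow> 'v list \<Rightarrow> nat \<Rightarrow> bool" where
  "is_path V adj xs s \<longleftrightarrow> length xs = Suc s \<and> set xs \<subseteq> V \<and>
     (\<forall>i<s. adj (xs ! i) (xs ! Suc i)) \<and>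
     (\<forall>i. 2 \<le> i \<and> i \<le> s \<longrightarrow> xs ! (i - 2) \<noteq> xs ! i)"

definition straight :: "('v \<Rightarrow> 'v \<Rightarrow> 'v \<Rightarrow> bool) \<Rightarrow> 'v list \<Rightarrow> bool" where
  "straight opp xs \<longleftrightarrow> (\<forall>i. 1 \<le> i \<and> Suc i < length xs \<longrightarrow> opp (xs ! i) (xs ! (i - 1)) (xs ! Suc i))"

definition closed_path :: "'v set \<Rightarrow> ('v \<Rightarrow> 'v \<Rightarrow> bool) \<Rightarrow> 'v list \<Rightarrow> nat \<Rightarrow> bool" where
  "closed_path V adj xs s \<longleftrightarrow> is_path V adj xs s \<and> 3 \<le> s \<and> hd xs = last xs"

definition circ_edges :: "'v list \<Rightarrow> 'v set set" where
  "circ_edges xs = {{xs ! i, xs ! Suc i} | i. Suc i < length xs}"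

definition path_in_circuit :: "'v set \<Rightarrow> ('v \<Rightarrow> 'v \<Rightarrow> bool) \<Rightarrow> 'v list \<Rightarrow> 'v list \<Rightarrow> bool" where
  "path_in_circuit V adj c q \<longleftrightarrow> (\<exists>s. is_path V adj q s) \<and> set q \<subseteq> set c \<and>
     (\<forall>i. Suc i < length q \<longrightarrow> {q ! i, q ! Suc i} \<in> circ_edges c)"

definition straight_circuit :: "'v set \<Rightarrow> ('v \<Rightarrow> 'v \<Rightarrow> bool) \<Rightarrow> ('v \<Rightarrow> 'v \<Rightarrow> 'v \<Rightarrow> bool) \<Rightarrow> 'v list \<Rightarrow> nat \<Rightarrow> bool" where
  "straight_circuit V adj opp c s \<longleftrightarrow> closed_path V adj c s \<and>
     (\<forall>q. path_in_circuit V adj c q \<longrightarrow> straight opp q)"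

definition walk :: "'v set \<Rightarrow> ('v \<Rightarrow> 'v \<Rightarrow> bool) \<Rightarrow> 'v list \<Rightarrow> bool" where
  "walk V adj xs \<longleftrightarrow> xs \<noteq> [] \<and> set xs \<subseteq> V \<and> (\<forall>i. Suc i < length xs \<longrightarrow> adj (xs ! i) (xs ! Suc i))"

definition connected_graph :: "'v set \<Rightarrow> ('v \<Rightarrow> 'v \<Rightarrow> bool) \<Rightarrow> bool" where
  "connected_graph V adj \<longleftrightarrow> (\<forall>u\<in>V. \<forall>v\<in>V. \<exists>xs. walk V adj xs \<and> hd xs = u \<and> last xs = v)"

definition bipartite :: "'v set \<Rightarrow> ('v \<Rightarrow> 'v \<Rightarrow> bool) \<Rightarrow> bool" where
  "bipartite V adj \<longleftrightarrow> (\<exists>c :: 'v \<Rightarrow> bool. \<forall>u v. adj u v \<longrightarrow> c u \<noteq> c v)"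

definition gdist :: "'v set \<Rightarrow> ('v \<Rightarrow> 'v \<Rightarrow> bool) \<Rightarrow> 'v \<Rightarrow> 'v \<Rightarrow> nat" where
  "gdist V adj u v = (LEAST k. \<exists>xs. walk V adj xs \<and> hd xs = u \<and> last xs = v \<and> length xs = Suc k)"

definition sphere :: "'v set \<Rightarrow> ('v \<Rightarrow> 'v \<Rightarrow> bool) \<Rightarrow> nat \<Rightarrow> 'v \<Rightarrow> 'v set" where
  "sphere V adj m v = {u \<in> V. gdist V adj u v = m}"

definition veldkamp_ngon :: "nat \<Rightarrow> 'v set \<Rightarrow> ('v \<Rightarrow> 'v \<Rightarrow> bool) \<Rightarrow> ('v \<Rightarrow> 'v \<Rightarrow> 'v \<Rightarrow> bool) \<Rightarrow> bool" where
  "veldkamp_ngon n V adj opp \<longleftrightarrow> 2 \<le> n \<and> veldkamp_graph V adj opp \<and>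
     connected_graph V adj \<and> bipartite V adj \<and>
     (\<forall>k p. 1 \<le> k \<and> k \<le> n - 1 \<and> is_path V adj p k \<and> straight opp p \<longrightarrow>
        (\<forall>q j. j \<le> k \<and> is_path V adj q j \<and> straight opp q \<and> hd q = hd p \<and> last q = last p \<longrightarrow> q = p)) \<and>
     (\<forall>p. is_path V adj p (n + 1) \<and> straight opp p \<longrightarrow>
        (\<exists>c. straight_circuit V adj opp c (2 * n) \<and> path_in_circuit V adj c p))"

definition opposite :: "nat \<Rightarrow> 'v set \<Rightarrow> ('v \<Rightarrow> 'v \<Rightarrow> bool) \<Rightarrow> ('v \<Rightarrow> 'v \<Rightarrow> 'v \<Rightarrow> bool) \<Rightarrow> 'v \<Rightarrow> 'v \<Rightarrow> bool" where
  "opposite n V adj opp x y \<longleftrightarrow> (\<exists>p. is_path V adj p n \<and> straight opp p \<and> hd p = x \<and> last p = y)"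

definition opp_set :: "nat \<Rightarrow> 'v set \<Rightarrow> ('v \<Rightarrow> 'v \<Rightarrow> bool) \<Rightarrow> ('v \<Rightarrow> 'v \<Rightarrow> 'v \<Rightarrow> bool) \<Rightarrow> 'v \<Rightarrow> 'v set" where
  "opp_set n V adj opp x = {y. opposite n V adj opp x y}"

(* green Veldkamp quadrangle with point set P (one bipartition class); lines are V - P *)
definition green_quadrangle :: "'v set \<Rightarrow> ('v \<Rightarrow> 'v \<Rightarrow> bool) \<Rightarrow> ('v \<Rightarrow> 'v \<Rightarrow> 'v \<Rightarrow> bool) \<Rightarrow> 'v set \<Rightarrow> bool" where
  "green_quadrangle V adj opp P \<longleftrightarrow> veldkamp_ngon 4 V adj opp \<and> P \<subseteq> V \<and>
     (\<forall>u v. adj u v \<longrightarrow> (u \<in> P \<longleftrightarrow> v \<notin> P)) \<and>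
     (\<forall>x\<in>V - P. trivial_rel (nbhd adj x) (opp x))"

end

theory Submission
  imports Defs
begin
lemma ex2: "(\<forall>i. 2 \<le> i \<and> i \<le> (2::nat) \<longrightarrow> Q i) \<longleftrightarrow> Q 2"
  by (metis le_antisym order_refl)
lemma ex3: "(\<forall>i. 2 \<le> i \<and> i \<le> (3::nat) \<longrightarrow> Q i) \<longleftrightarrow> Q 2 \<and> Q 3"
  apply safe apply simp_all
  by (metis le_antisym not_less_eq_eq numeral_2_eq_2 numeral_3_eq_3)
lemma ex4: "(\<forall>i. 2 \<le> i \<and> i \<le> (4::nat) \<longrightarrow> Q i) \<longleftrightarrow> Q 2 \<and> Q 3 \<and> Q 4"
proof -
  have "(2 \<le> i \<and> i \<le> (4::nat)) \<longleftrightarrow> i = 2 \<or> i = 3 \<or> i = 4" for i by arith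
  thus ?thesis by auto
qed
lemma ex5: "(\<forall>i. 2 \<le> i \<and> i \<le> (5::nat) \<longrightarrow> Q i) \<longleftrightarrow> Q 2 \<and> Q 3 \<and> Q 4 \<and> Q 5"
proof -
  have "(2 \<le> i \<and> i \<le> (5::nat)) \<longleftrightarrow> i = 2 \<or> i = 3 \<or> i = 4 \<or> i = 5" for i by arith
  thus ?thesis by auto
qed
lemma lt2: "(\<forall>i<(2::nat). Q i) \<longleftrightarrow> Q 0 \<and> Q 1"
proof -
  have "(i < (2::nat)) \<longleftrightarrow> i = 0 \<or> i = 1" for i by arith
  thus ?thesis by auto
qed
lemma lt3: "(\<forall>i<(3::nat). Q i) \<longleftrightarrow> Q 0 \<and> Q 1 \<and> Q 2"
proof -
  have "(i < (3::nat)) \<longleftrightarrow> i = 0 \<or> i = 1 \<or> i = 2" for i by arith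
  thus ?thesis by auto
qed
lemma lt4: "(\<forall>i<(4::nat). Q i) \<longleftrightarrow> Q 0 \<and> Q 1 \<and> Q 2 \<and> Q 3"
proof -
  have "(i < (4::nat)) \<longleftrightarrow> i = 0 \<or> i = 1 \<or> i = 2 \<or> i = 3" for i by arith
  thus ?thesis by auto
qed
lemma lt5: "(\<forall>i<(5::nat). Q i) \<longleftrightarrow> Q 0 \<and> Q 1 \<and> Q 2 \<and> Q 3 \<and> Q 4"
proof -
  have "(i < (5::nat)) \<longleftrightarrow> i = 0 \<or> i = 1 \<or> i = 2 \<or> i = 3 \<or> i = 4" for i by arith
  thus ?thesis by auto
qed
lemma sb3: "(\<forall>i. 1 \<le> i \<and> Suc i < (3::nat) \<longrightarrow> Q i) \<longleftrightarrow> Q 1"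
proof -
  have "(1 \<le> i \<and> Suc i < (3::nat)) \<longleftrightarrow> i = 1" for i by arith
  thus ?thesis by auto
qed
lemma sb4: "(\<forall>i. 1 \<le> i \<and> Suc i < (4::nat) \<longrightarrow> Q i) \<longleftrightarrow> Q 1 \<and> Q 2"
proof -
  have "(1 \<le> i \<and> Suc i < (4::nat)) \<longleftrightarrow> i = 1 \<or> i = 2" for i by arith
  thus ?thesis by auto
qed
lemma sb5: "(\<forall>i. 1 \<le> i \<and> Suc i < (5::nat) \<longrightarrow> Q i) \<longleftrightarrow> Q 1 \<and> Q 2 \<and> Q 3"
proof -
  have "(1 \<le> i \<and> Suc i < (5::nat)) \<longleftrightarrow> i = 1 \<or> i = 2 \<or> i = 3" for i by arith
  thus ?thesis by auto
qed
lemma sb6: "(\<forall>i. 1 \<le> i \<and> Suc i < (6::nat) \<longrightarrow> Q i) \<longleftrightarrow> Q 1 \<and> Q 2 \<and> Q 3 \<and> Q 4"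
proof -
  have "(1 \<le> i \<and> Suc i < (6::nat)) \<longleftrightarrow> i = 1 \<or> i = 2 \<or> i = 3 \<or> i = 4" for i by arith
  thus ?thesis by auto
qed
lemma lens: "length [x0,x1,x2] = 3" "length [x0,x1,x2,x3] = 4" "length [x0,x1,x2,x3,x4] = 5" "length [x0,x1,x2,x3,x4,x5] = 6" by simp_all
lemmas expand = ex2 ex3 ex4 ex5 lt2 lt3 lt4 lt5 sb3 sb4 sb5 sb6

lemma path2: "is_path V adj [x0,x1,x2] 2 \<longleftrightarrow> {x0,x1,x2} \<subseteq> V \<and> adj x0 x1 \<and> adj x1 x2 \<and> x0 \<noteq> x2"
  unfolding is_path_def expand by simp
lemma path3: "is_path V adj [x0,x1,x2,x3] 3 \<longleftrightarrow> {x0,x1,x2,x3} \<subseteq> V \<and> adj x0 x1 \<and> adj x1 x2 \<and> adj x2 x3 \<and> x0 \<noteq> x2 \<and> x1 \<noteq> x3"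
  unfolding is_path_def expand by simp
lemma path4: "is_path V adj [x0,x1,x2,x3,x4] 4 \<longleftrightarrow> {x0,x1,x2,x3,x4} \<subseteq> V \<and> adj x0 x1 \<and> adj x1 x2 \<and> adj x2 x3 \<and> adj x3 x4 \<and> x0 \<noteq> x2 \<and> x1 \<noteq> x3 \<and> x2 \<noteq> x4"
  unfolding is_path_def expand by simp
lemma path5: "is_path V adj [x0,x1,x2,x3,x4,x5] 5 \<longleftrightarrow> {x0,x1,x2,x3,x4,x5} \<subseteq> V \<and> adj x0 x1 \<and> adj x1 x2 \<and> adj x2 x3 \<and> adj x3 x4 \<and> adj x4 x5 \<and> x0 \<noteq> x2 \<and> x1 \<noteq> x3 \<and> x2 \<noteq> x4 \<and> x3 \<noteq> x5"
  unfolding is_path_def expand by simp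
lemma str2: "straight opp [x0,x1,x2] \<longleftrightarrow> opp x1 x0 x2"
  unfolding straight_def lens expand by simp
lemma str3: "straight opp [x0,x1,x2,x3] \<longleftrightarrow> opp x1 x0 x2 \<and> opp x2 x1 x3"
  unfolding straight_def lens expand by simp
lemma str4: "straight opp [x0,x1,x2,x3,x4] \<longleftrightarrow> opp x1 x0 x2 \<and> opp x2 x1 x3 \<and> opp x3 x2 x4"
  unfolding straight_def lens expand by simp
lemma str5: "straight opp [x0,x1,x2,x3,x4,x5] \<longleftrightarrow> opp x1 x0 x2 \<and> opp x2 x1 x3 \<and> opp x3 x2 x4 \<and> opp x4 x3 x5"
  unfolding straight_def lens expand by simp

lemma walk1: "walk V adj [x0] \<longleftrightarrow> x0 \<in> V"
  unfolding walk_def by simp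
lemma sl3: "(\<forall>i. Suc i < (3::nat) \<longrightarrow> Q i) \<longleftrightarrow> Q 0 \<and> Q 1"
proof -
  have "(Suc i < (3::nat)) \<longleftrightarrow> i = 0 \<or> i = 1" for i by arith
  thus ?thesis by auto
qed
lemma sl4: "(\<forall>i. Suc i < (4::nat) \<longrightarrow> Q i) \<longleftrightarrow> Q 0 \<and> Q 1 \<and> Q 2"
proof -
  have "(Suc i < (4::nat)) \<longleftrightarrow> i = 0 \<or> i = 1 \<or> i = 2" for i by arith
  thus ?thesis by auto
qed
lemma sl6: "(\<forall>i. Suc i < (6::nat) \<longrightarrow> Q i) \<longleftrightarrow> Q 0 \<and> Q 1 \<and> Q 2 \<and> Q 3 \<and> Q 4"
proof -
  have "(Suc i < (6::nat)) \<longleftrightarrow> i = 0 \<or> i = 1 \<or> i = 2 \<or> i = 3 \<or> i = 4" for i by arith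
  thus ?thesis by auto
qed
lemma walk3: "walk V adj [x0,x1,x2] \<longleftrightarrow> {x0,x1,x2} \<subseteq> V \<and> adj x0 x1 \<and> adj x1 x2"
  unfolding walk_def lens sl3 by simp
lemma len_split:
  "length xs = 1 \<Longrightarrow> \<exists>a. xs = [a]"
  "length xs = 2 \<Longrightarrow> \<exists>a b. xs = [a,b]"
  "length xs = 3 \<Longrightarrow> \<exists>a b c. xs = [a,b,c]"
  "length xs = 5 \<Longrightarrow> \<exists>a b c d e. xs = [a,b,c,d,e]"
  "length xs = 6 \<Longrightarrow> \<exists>a b c d e f. xs = [a,b,c,d,e,f]"
  by (simp_all add: eval_nat_numeral length_Suc_conv) blast+

definition cyc :: "'v list \<Rightarrow> nat \<Rightarrow> 'v" where "cyc c k = c ! (k mod 8)"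

definition coll :: "('v \<Rightarrow> 'v \<Rightarrow> bool) \<Rightarrow> 'v \<Rightarrow> 'v \<Rightarrow> bool" where
  "coll adj u v \<longleftrightarrow> (\<exists>T. adj u T \<and> adj T v)"

locale GQ =
  fixes V :: "'v set" and adj :: "'v \<Rightarrow> 'v \<Rightarrow> bool" and opp :: "'v \<Rightarrow> 'v \<Rightarrow> 'v \<Rightarrow> bool" and P :: "'v set"
  assumes gq: "green_quadrangle V adj opp P"
begin

lemma ngon: "veldkamp_ngon 4 V adj opp" using gq unfolding green_quadrangle_def by auto
lemma gr: "graph V adj" using ngon unfolding veldkamp_ngon_def veldkamp_graph_def by auto
lemma adjV: "adj u v \<Longrightarrow> u \<in> V \<and> v \<in> V" using gr unfolding graph_def by auto
lemma adj_sym: "adj u v \<Longrightarrow> adj v u" using gr unfolding graph_def by auto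
lemma adj_neq: "adj u v \<Longrightarrow> u \<noteq> v" using gr unfolding graph_def by auto
lemma bip: "adj u v \<Longrightarrow> (u \<in> P \<longleftrightarrow> v \<notin> P)" using gq unfolding green_quadrangle_def by auto
lemma PV: "P \<subseteq> V" using gq unfolding green_quadrangle_def by auto
lemma conn: "connected_graph V adj" using ngon unfolding veldkamp_ngon_def by auto
lemma oppr: "v \<in> V \<Longrightarrow> opposition_rel (nbhd adj v) (opp v)"
  using ngon unfolding veldkamp_ngon_def veldkamp_graph_def by auto
lemma plumpv: "v \<in> V \<Longrightarrow> plump 2 (nbhd adj v) (opp v)"
  using ngon unfolding veldkamp_ngon_def veldkamp_graph_def by auto
lemma opp_adj: "v \<in> V \<Longrightarrow> opp v x y \<Longrightarrow> adj v x \<and> adj v y"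
  using oppr unfolding opposition_rel_def nbhd_def by blast
lemma opp_sym: "v \<in> V \<Longrightarrow> opp v x y \<Longrightarrow> opp v y x"
  using oppr unfolding opposition_rel_def by blast
lemma opp_irr: "v \<in> V \<Longrightarrow> opp v x y \<Longrightarrow> x \<noteq> y"
  using oppr unfolding opposition_rel_def by blast
lemma triv: "adj v x \<Longrightarrow> v \<notin> P \<Longrightarrow> adj v y \<Longrightarrow> x \<noteq> y \<Longrightarrow> opp v x y"
  using gq adjV unfolding green_quadrangle_def trivial_rel_def nbhd_def by blast
lemma plump2: assumes "adj v x" "adj v y" shows "\<exists>z. adj v z \<and> opp v z x \<and> opp v z y"
proof -
  have v: "v \<in> V" using adjV assms by blast
  have "card {x,y} \<le> 2" by (simp add: card_insert_if)
  moreover have "{x,y} \<subseteq> nbhd adj v" using assms unfolding nbhd_def by auto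
  ultimately have "\<exists>z\<in>nbhd adj v. \<forall>s\<in>{x,y}. opp v z s"
    using plumpv[OF v] unfolding plump_def by blast
  thus ?thesis unfolding nbhd_def by auto
qed
lemma plump1: assumes "adj v x" shows "\<exists>z. adj v z \<and> opp v z x"
  using plump2[OF assms assms] by blast
lemma vp2: "1 \<le> k \<Longrightarrow> k \<le> 3 \<Longrightarrow> is_path V adj p k \<Longrightarrow> straight opp p \<Longrightarrow> j \<le> k \<Longrightarrow>
   is_path V adj q j \<Longrightarrow> straight opp q \<Longrightarrow> hd q = hd p \<Longrightarrow> last q = last p \<Longrightarrow> q = p"
proof -
  assume a: "1 \<le> k" "k \<le> 3" "is_path V adj p k" "straight opp p" "j \<le> k"
   "is_path V adj q j" "straight opp q" "hd q = hd p" "last q = last p"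
  have "\<forall>k p. 1 \<le> k \<and> k \<le> 4 - 1 \<and> is_path V adj p k \<and> straight opp p \<longrightarrow>
        (\<forall>q j. j \<le> k \<and> is_path V adj q j \<and> straight opp q \<and> hd q = hd p \<and> last q = last p \<longrightarrow> q = p)"
    using ngon unfolding veldkamp_ngon_def by blast
  note H = this[rule_format, where k=k and p=p and q=q and j=j]
  show "q = p" using H a by simp
qed
lemma vp3: "is_path V adj p 5 \<Longrightarrow> straight opp p \<Longrightarrow>
   \<exists>c. straight_circuit V adj opp c 8 \<and> path_in_circuit V adj c p"
proof -
  have "\<forall>p. is_path V adj p (4 + 1) \<and> straight opp p \<longrightarrow>
        (\<exists>c. straight_circuit V adj opp c (2 * 4) \<and> path_in_circuit V adj c p)"
    using ngon unfolding veldkamp_ngon_def by blast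
  thus "is_path V adj p 5 \<Longrightarrow> straight opp p \<Longrightarrow> \<exists>c. straight_circuit V adj opp c 8 \<and> path_in_circuit V adj c p" by simp
qed

lemma walk_le: "walk V adj xs \<Longrightarrow> hd xs = u \<Longrightarrow> last xs = v \<Longrightarrow> length xs = Suc k \<Longrightarrow> gdist V adj u v \<le> k"
  unfolding gdist_def by (rule Least_le) blast
lemma walk_gd: assumes "u \<in> V" "v \<in> V"
  shows "\<exists>ys. walk V adj ys \<and> hd ys = u \<and> last ys = v \<and> length ys = Suc (gdist V adj u v)"
proof -
  obtain xs where xs: "walk V adj xs" "hd xs = u" "last xs = v" using conn assms unfolding connected_graph_def by blast
  hence "length xs = Suc (length xs - 1)" unfolding walk_def by (cases xs) auto
  with xs have "\<exists>k ys. walk V adj ys \<and> hd ys = u \<and> last ys = v \<and> length ys = Suc k" by blast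
  hence "(\<lambda>k. \<exists>ys. walk V adj ys \<and> hd ys = u \<and> last ys = v \<and> length ys = Suc k)
     (LEAST k. \<exists>ys. walk V adj ys \<and> hd ys = u \<and> last ys = v \<and> length ys = Suc k)"
    by (rule LeastI_ex)
  thus ?thesis unfolding gdist_def by simp
qed
lemma coll_P: assumes "coll adj u v" "v \<in> P" shows "u \<in> P"
proof -
  obtain T where T: "adj u T" "adj T v" using assms unfolding coll_def by blast
  have "T \<notin> P" using bip[OF T(2)] assms(2) by simp
  thus ?thesis using bip[OF T(1)] by simp
qed
lemma coll_sym: "coll adj u v \<Longrightarrow> coll adj v u"
  unfolding coll_def using adj_sym by blast
lemma sphere2: assumes "b \<in> P" shows "u \<in> sphere V adj 2 b \<longleftrightarrow> u \<noteq> b \<and> coll adj u b"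
proof
  assume "u \<in> sphere V adj 2 b"
  hence u: "u \<in> V" and g: "gdist V adj u b = 2" unfolding sphere_def by auto
  have b: "b \<in> V" using assms PV by blast
  obtain ys where ys: "walk V adj ys" "hd ys = u" "last ys = b" "length ys = Suc (gdist V adj u b)"
    using walk_gd[OF u b] by blast
  hence "length ys = 3" using g by simp
  then obtain x0 x1 x2 where ys': "ys = [x0,x1,x2]" using len_split(3) by blast
  hence "adj x0 x1" "adj x1 x2" "x0 = u" "x2 = b" using ys walk3[of V adj x0 x1 x2] by auto
  hence "coll adj u b" unfolding coll_def by blast
  moreover have "u \<noteq> b"
  proof
    assume "u = b"
    have "gdist V adj u u \<le> 0" by (rule walk_le[of "[u]"]) (simp_all add: walk1 u)
    thus False using g \<open>u = b\<close> by simp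
  qed
  ultimately show "u \<noteq> b \<and> coll adj u b" by blast
next
  assume H: "u \<noteq> b \<and> coll adj u b"
  then obtain T where T: "adj u T" "adj T b" unfolding coll_def by blast
  have u: "u \<in> V" using T adjV by blast
  have b: "b \<in> V" using assms PV by blast
  have uP: "u \<in> P" using coll_P H assms by blast
  have le: "gdist V adj u b \<le> 2" by (rule walk_le[of "[u,T,b]"]) (use T adjV in \<open>simp_all add: walk3\<close>)
  obtain ys where ys: "walk V adj ys" "hd ys = u" "last ys = b" "length ys = Suc (gdist V adj u b)"
    using walk_gd[OF u b] by blast
  have "gdist V adj u b \<noteq> 0"
  proof
    assume "gdist V adj u b = 0"
    hence "length ys = 1" using ys by simp
    then obtain x0 where "ys = [x0]" using len_split(1) by blast
    thus False using ys H by simp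
  qed
  moreover have "gdist V adj u b \<noteq> 1"
  proof
    assume "gdist V adj u b = 1"
    hence "length ys = 2" using ys by simp
    then obtain x0 x1 where ys': "ys = [x0,x1]" using len_split(2) by blast
    have "\<forall>i. Suc i < length ys \<longrightarrow> adj (ys ! i) (ys ! Suc i)" using ys unfolding walk_def by blast
    hence "adj (ys!0) (ys!1)" using ys' by simp
    hence "adj u b" using ys ys' by simp
    thus False using bip uP assms by blast
  qed
  ultimately have "gdist V adj u b = 2" using le by linarith
  thus "u \<in> sphere V adj 2 b" unfolding sphere_def using u by auto
qed
lemma gd4: assumes "gdist V adj a b = 4" "a \<in> V" "b \<in> V"
  shows "a \<noteq> b" "\<not> coll adj a b" "\<exists>L x M. adj a L \<and> adj L x \<and> adj x M \<and> adj M b"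
proof -
  show "a \<noteq> b"
  proof
    assume "a = b"
    have "gdist V adj a a \<le> 0" by (rule walk_le[of "[a]"]) (simp_all add: walk1 assms)
    thus False using assms \<open>a = b\<close> by simp
  qed
  show "\<not> coll adj a b"
  proof
    assume "coll adj a b"
    then obtain T where T: "adj a T" "adj T b" unfolding coll_def by blast
    have "gdist V adj a b \<le> 2" by (rule walk_le[of "[a,T,b]"]) (use T adjV in \<open>simp_all add: walk3\<close>)
    thus False using assms by simp
  qed
  obtain ys where ys: "walk V adj ys" "hd ys = a" "last ys = b" "length ys = Suc (gdist V adj a b)"
    using walk_gd[OF assms(2,3)] by blast
  hence "length ys = 5" using assms by simp
  then obtain x0 x1 x2 x3 x4 where ys': "ys = [x0,x1,x2,x3,x4]" using len_split(4) by blast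
  have H: "\<forall>i. Suc i < length ys \<longrightarrow> adj (ys ! i) (ys ! Suc i)" using ys unfolding walk_def by blast
  have "adj x0 x1" "adj x1 x2" "adj x2 x3" "adj x3 x4"
    using H[rule_format, of 0] H[rule_format, of 1] H[rule_format, of 2] H[rule_format, of 3] ys' by simp_all
  thus "\<exists>L x M. adj a L \<and> adj L x \<and> adj x M \<and> adj M b" using ys ys' by auto
qed

lemma no4_aux: assumes "adj a b" "adj b c" "adj c d" "adj d a" "a \<noteq> c" "b \<noteq> d" "a \<in> P" shows False
proof -
  have bP: "b \<notin> P" using bip[OF assms(1)] assms(7) by simp
  have dP: "d \<notin> P" using bip[OF assms(4)] assms(7) by simp
  have V: "a \<in> V" "b \<in> V" "c \<in> V" "d \<in> V" using adjV assms by blast+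
  have p: "is_path V adj [a,b,c] 2" using V assms by (simp add: path2)
  have q: "is_path V adj [a,d,c] 2" using V assms adj_sym by (simp add: path2)
  have sp: "straight opp [a,b,c]" unfolding str2 using triv[OF adj_sym[OF assms(1)] bP assms(2) assms(5)] .
  have sq: "straight opp [a,d,c]" unfolding str2 using triv[OF assms(4) dP adj_sym[OF assms(3)] assms(5)] .
  have "[a,d,c] = [a,b,c]" by (rule vp2[OF _ _ p sp _ q sq]) simp_all
  thus False using assms(6) by simp
qed
lemma no4: assumes "adj w0 w1" "adj w1 w2" "adj w2 w3" "adj w3 w0" "w0 \<noteq> w2" "w1 \<noteq> w3" shows False
proof (cases "w0 \<in> P")
  case True thus ?thesis using no4_aux[OF assms] by blast
next
  case False
  hence "w1 \<in> P" using bip[OF assms(1)] by simp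
  thus ?thesis using no4_aux[OF assms(2,3,4,1)] assms(5,6) by metis
qed

definition good :: "'v list \<Rightarrow> bool" where
  "good c \<longleftrightarrow> length c = 9 \<and> c!8 = c!0 \<and> set c \<subseteq> V \<and> (\<forall>k<8. adj (c!k) (c!Suc k)) \<and>
     (\<forall>i j. i < j \<and> j < 8 \<longrightarrow> c!i \<noteq> c!j)"

lemma edge_in: "Suc i < length c \<Longrightarrow> {c!i, c!Suc i} \<in> circ_edges c"
  unfolding circ_edges_def by blast

lemma circ_good: assumes sc: "straight_circuit V adj opp c 8" shows "good c"
proof -
  have cp: "is_path V adj c 8" "hd c = last c" using sc unfolding straight_circuit_def closed_path_def by auto
  have len: "length c = 9" using cp unfolding is_path_def by simp
  have sV: "set c \<subseteq> V" using cp unfolding is_path_def by simp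
  have A: "\<And>k. k < 8 \<Longrightarrow> adj (c!k) (c!Suc k)" using cp unfolding is_path_def by simp
  have B: "\<And>i. 2 \<le> i \<Longrightarrow> i \<le> 8 \<Longrightarrow> c!(i-2) \<noteq> c!i" using cp unfolding is_path_def by simp
  have ne: "c \<noteq> []" using len by auto
  have "hd c = c!0" "last c = c!8" using ne len by (simp_all add: hd_conv_nth last_conv_nth)
  hence c80: "c!8 = c!0" using cp(2) by simp
  have strq: "\<And>q. path_in_circuit V adj c q \<Longrightarrow> straight opp q" using sc unfolding straight_circuit_def by blast
  have cV: "\<And>k. k < 9 \<Longrightarrow> c!k \<in> V" using sV len nth_mem by (metis subsetD)
  have par: "\<And>k. k \<le> 8 \<Longrightarrow> (c!k \<in> P) = ((c!0 \<in> P) = even k)"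
  proof -
    fix k :: nat assume "k \<le> 8" thus "(c!k \<in> P) = ((c!0 \<in> P) = even k)"
    proof (induction k)
      case 0 thus ?case by simp
    next
      case (Suc k)
      hence "(c!k \<in> P) = ((c!0 \<in> P) = even k)" by simp
      moreover have "(c!k \<in> P) = (c!Suc k \<notin> P)" using bip[OF A] Suc.prems by simp
      ultimately show ?case by auto
    qed
  qed
  have d2: "\<And>i. i + 2 \<le> 8 \<Longrightarrow> c!i \<noteq> c!(i+2)" using B by (metis add_diff_cancel_right' le_add2)
  have d4: "\<And>i. i + 4 \<le> 8 \<Longrightarrow> c!i \<noteq> c!(i+4)"
  proof
    fix i assume i: "i + 4 \<le> 8" and e: "c!i = c!(i+4)"
    have a1: "adj (c!i) (c!(i+1))" using A i by simp
    have a2: "adj (c!(i+1)) (c!(i+2))" using A[of "i+1"] i by simp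
    have a3: "adj (c!(i+2)) (c!(i+3))" using A[of "i+2"] i by (simp add: numeral_eq_Suc)
    have a4: "adj (c!(i+3)) (c!i)" using A[of "i+3"] i e by (simp add: numeral_eq_Suc)
    have n1: "c!i \<noteq> c!(i+2)" using d2 i by simp
    have n2: "c!(i+1) \<noteq> c!(i+3)" using d2[of "i+1"] i by (simp add: numeral_eq_Suc)
    show False using no4[OF a1 a2 a3 a4 n1 n2] .
  qed
  have lol: "c!1 \<noteq> c!7"
  proof
    assume e: "c!1 = c!7"
    have n1: "c!1 \<noteq> c!3" using d2[of 1] by (simp add: numeral_eq_Suc)
    have n2: "c!2 \<noteq> c!4" using d2[of 2] by (simp add: numeral_eq_Suc)
    have n3: "c!1 \<noteq> c!5" using d4[of 1] by (simp add: numeral_eq_Suc)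
    have n4: "c!6 \<noteq> c!4" using d2[of 4] by (simp add: numeral_eq_Suc)
    have n5: "c!6 \<noteq> c!2" using d4[of 2] by (simp add: numeral_eq_Suc)
    note ne = n1 n2 n3 n4 n5
    have ad: "adj (c!1) (c!2)" "adj (c!2) (c!3)" "adj (c!3) (c!4)" "adj (c!4) (c!5)" "adj (c!5) (c!6)" "adj (c!6) (c!7)"
      using A[of 1] A[of 2] A[of 3] A[of 4] A[of 5] A[of 6] by (simp_all add: numeral_eq_Suc)
    have inV: "c!1 \<in> V" "c!2 \<in> V" "c!3 \<in> V" "c!4 \<in> V" "c!5 \<in> V" "c!6 \<in> V" using cV by simp_all
    have inS: "c!1 \<in> set c" "c!2 \<in> set c" "c!3 \<in> set c" "c!4 \<in> set c" "c!5 \<in> set c" "c!6 \<in> set c"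
      using len by (simp_all add: nth_mem)
    have ed: "{c!1,c!2} \<in> circ_edges c" "{c!2,c!3} \<in> circ_edges c" "{c!3,c!4} \<in> circ_edges c"
      "{c!4,c!5} \<in> circ_edges c" "{c!5,c!6} \<in> circ_edges c" "{c!6,c!7} \<in> circ_edges c"
      using edge_in[of 1 c] edge_in[of 2 c] edge_in[of 3 c] edge_in[of 4 c] edge_in[of 5 c] edge_in[of 6 c] len
      by (simp_all add: numeral_eq_Suc)
    let ?p = "[c!1, c!2, c!3, c!4]" and ?q = "[c!1, c!6, c!5, c!4]"
    have pp: "is_path V adj ?p 3" using inV ad ne by (simp add: path3)
    have pq: "is_path V adj ?q 3" using inV ad ne e adj_sym by (simp add: path3)
    have "path_in_circuit V adj c ?p"
      unfolding path_in_circuit_def lens sl4 using pp inS ed by auto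
    hence sp: "straight opp ?p" by (rule strq)
    have "path_in_circuit V adj c ?q"
      unfolding path_in_circuit_def lens sl4 using pq inS ed e by (auto simp: insert_commute)
    hence sq: "straight opp ?q" by (rule strq)
    have "?q = ?p" by (rule vp2[OF _ _ pp sp _ pq sq]) simp_all
    thus False using ne by simp
  qed
  have dist: "\<forall>i j. i < j \<and> j < 8 \<longrightarrow> c!i \<noteq> c!j"
  proof (intro allI impI notI)
    fix i j assume ij: "i < j \<and> j < 8" and e: "c!i = c!j"
    have "even i = even j" using par[of i] par[of j] ij e by auto
    hence "j = i+2 \<or> j = i+4 \<or> j = i+6" using ij by presburger
    moreover have "j \<noteq> i+2" using d2[of i] ij e by auto
    moreover have "j \<noteq> i+4" using d4[of i] ij e by auto
    moreover have "j \<noteq> i+6"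
    proof
      assume j: "j = i+6"
      hence "i = 0 \<or> i = 1" using ij by arith
      moreover have "c!0 \<noteq> c!6" using d2[of 6] c80 by simp
      ultimately show False using lol e j by auto
    qed
    ultimately show False by blast
  qed
  show ?thesis unfolding good_def using len c80 sV A dist by auto
qed

lemma cyc_eq: "a mod 8 = b mod 8 \<Longrightarrow> cyc c a = cyc c b"
  unfolding cyc_def by simp
lemma cyc_inj: assumes g: "good c" and e: "cyc c a = cyc c b" shows "a mod 8 = b mod 8"
proof (rule ccontr)
  assume ne: "a mod 8 \<noteq> b mod 8"
  have d: "\<forall>i j. i < j \<and> j < 8 \<longrightarrow> c!i \<noteq> c!j" using g unfolding good_def by blast
  have "a mod 8 < 8" "b mod 8 < 8" by simp_all
  have "c!(a mod 8) \<noteq> c!(b mod 8)"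
  proof (cases "a mod 8 < b mod 8")
    case True thus ?thesis using d[rule_format, of "a mod 8" "b mod 8"] by simp
  next
    case False hence "b mod 8 < a mod 8" using ne by simp
    thus ?thesis using d[rule_format, of "b mod 8" "a mod 8"] by simp
  qed
  thus False using e unfolding cyc_def by simp
qed
lemma cyc_Suc: assumes g: "good c" shows "cyc c (Suc k) = c ! Suc (k mod 8)"
proof (cases "k mod 8 = 7")
  case True
  hence "Suc k mod 8 = 0" by presburger
  thus ?thesis using True g unfolding cyc_def good_def by simp
next
  case False
  hence "Suc k mod 8 = Suc (k mod 8)" using mod_Suc by simp
  thus ?thesis unfolding cyc_def by simp
qed
lemma cyc_adj: assumes g: "good c" and b: "b mod 8 = (a+1) mod 8" shows "adj (cyc c a) (cyc c b)"
proof -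
  have "cyc c b = cyc c (Suc a)" using b by (intro cyc_eq) simp
  also have "\<dots> = c ! Suc (a mod 8)" using cyc_Suc[OF g] .
  finally show ?thesis using g unfolding good_def cyc_def by simp
qed
lemma cyc_edge: assumes g: "good c" and b: "b mod 8 = (a+1) mod 8"
  shows "{cyc c a, cyc c b} \<in> circ_edges c" "{cyc c b, cyc c a} \<in> circ_edges c"
proof -
  have "cyc c b = cyc c (Suc a)" using b by (intro cyc_eq) simp
  also have "\<dots> = c ! Suc (a mod 8)" using cyc_Suc[OF g] .
  finally have e: "cyc c b = c ! Suc (a mod 8)" .
  have "Suc (a mod 8) < length c" using g unfolding good_def by simp
  hence "{c ! (a mod 8), c ! Suc (a mod 8)} \<in> circ_edges c" by (rule edge_in)
  thus "{cyc c a, cyc c b} \<in> circ_edges c" "{cyc c b, cyc c a} \<in> circ_edges c"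
    using e unfolding cyc_def by (simp_all add: insert_commute)
qed
lemma cyc_mem: "good c \<Longrightarrow> cyc c k \<in> set c"
  unfolding good_def cyc_def by simp
lemma cyc_V: "good c \<Longrightarrow> cyc c k \<in> V"
  using cyc_mem unfolding good_def by blast
lemma edge_cyc: assumes g: "good c" and e: "e \<in> circ_edges c" shows "\<exists>m. e = {cyc c m, cyc c (Suc m)}"
proof -
  obtain i where i: "e = {c!i, c!Suc i}" "Suc i < length c" using e unfolding circ_edges_def by blast
  hence i8: "i < 8" using g unfolding good_def by simp
  hence "cyc c i = c!i" "cyc c (Suc i) = c!Suc i" using cyc_Suc[OF g, of i] unfolding cyc_def by simp_all
  thus ?thesis using i by (intro exI[of _ i]) simp
qed
lemma cong_add: assumes "(a::nat) mod 8 = m mod 8" shows "(m + k) mod 8 = (a + k) mod 8"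
proof -
  have "(m + k) mod 8 = (m mod 8 + k) mod 8" by (simp add: mod_add_left_eq)
  also have "\<dots> = (a mod 8 + k) mod 8" using assms by simp
  also have "\<dots> = (a + k) mod 8" by (simp add: mod_add_left_eq)
  finally show ?thesis .
qed
lemma suc_mod8: "Suc a mod 8 = Suc b mod 8 \<longleftrightarrow> a mod 8 = b mod (8::nat)"
proof -
  have "a mod 8 < 8" "b mod 8 < 8" by simp_all
  thus ?thesis unfolding mod_Suc by auto
qed
lemma off_iff: "((s::nat) + k1) mod 8 = (s + k2) mod 8 \<longleftrightarrow> k1 mod 8 = k2 mod 8"
proof (induction s arbitrary: k1 k2)
  case 0 thus ?case by simp
next
  case (Suc s)
  have "(Suc s + k1) mod 8 = (Suc s + k2) mod 8 \<longleftrightarrow> (s + Suc k1) mod 8 = (s + Suc k2) mod 8" by simp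
  also have "\<dots> \<longleftrightarrow> Suc k1 mod 8 = Suc k2 mod 8" using Suc.IH .
  also have "\<dots> \<longleftrightarrow> k1 mod 8 = k2 mod 8" by (rule suc_mod8)
  finally show ?case .
qed
lemma nbr: assumes g: "good c" and e: "{cyc c a, y} \<in> circ_edges c"
  shows "y = cyc c (a+1) \<or> y = cyc c (a+7)"
proof -
  obtain m where m: "{cyc c a, y} = {cyc c m, cyc c (Suc m)}" using edge_cyc[OF g e] by blast
  hence "(cyc c a = cyc c m \<and> y = cyc c (Suc m)) \<or> (cyc c a = cyc c (Suc m) \<and> y = cyc c m)"
    by (simp add: doubleton_eq_iff)
  thus ?thesis
  proof
    assume h: "cyc c a = cyc c m \<and> y = cyc c (Suc m)"
    hence "a mod 8 = m mod 8" using cyc_inj[OF g] by blast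
    hence "(m + 1) mod 8 = (a+1) mod 8" by (rule cong_add)
    hence "cyc c (Suc m) = cyc c (a+1)" by (intro cyc_eq) simp
    thus ?thesis using h by simp
  next
    assume h: "cyc c a = cyc c (Suc m) \<and> y = cyc c m"
    hence "a mod 8 = Suc m mod 8" using cyc_inj[OF g] by blast
    hence "(Suc m + 7) mod 8 = (a+7) mod 8" by (rule cong_add)
    moreover have "(Suc m + 7) mod 8 = m mod 8" by simp
    ultimately have "cyc c m = cyc c (a+7)" by (intro cyc_eq) simp
    thus ?thesis using h by simp
  qed
qed
lemma nbr_o: assumes g: "good c" and e: "{cyc c (s+k), y} \<in> circ_edges c"
  and h1: "k1 mod 8 = (k+1) mod 8" and h7: "k7 mod 8 = (k+7) mod 8"
  shows "y = cyc c (s+k1) \<or> y = cyc c (s+k7)"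
proof -
  have "cyc c (s+k+1) = cyc c (s+k1)" "cyc c (s+k+7) = cyc c (s+k7)"
    by (rule cyc_eq, unfold add.assoc off_iff, use h1 h7 in simp)+
  thus ?thesis using nbr[OF g e] by simp
qed
lemma step_o: assumes g: "good c" and e: "{cyc c (s+k), y} \<in> circ_edges c" and ne: "y \<noteq> cyc c (s+kb)"
  and b: "kb mod 8 = (k+7) mod 8" and d: "kd mod 8 = (k+1) mod 8"
  shows "y = cyc c (s+kd)"
  using nbr_o[OF g e d b] ne by blast
lemma stepb_o: assumes g: "good c" and e: "{cyc c (s+k), y} \<in> circ_edges c" and ne: "y \<noteq> cyc c (s+kb)"
  and b: "kb mod 8 = (k+1) mod 8" and d: "kd mod 8 = (k+7) mod 8"
  shows "y = cyc c (s+kd)"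
  using nbr_o[OF g e b d] ne by blast
lemma adj_o: assumes g: "good c" and h: "k2 mod 8 = (k1+1) mod 8"
  shows "adj (cyc c (s+k1)) (cyc c (s+k2))"
  by (rule cyc_adj[OF g]) (unfold add.assoc off_iff, use h in simp)
lemma edge_o: assumes g: "good c" and h: "k2 mod 8 = (k1+1) mod 8"
  shows "{cyc c (s+k1), cyc c (s+k2)} \<in> circ_edges c" "{cyc c (s+k2), cyc c (s+k1)} \<in> circ_edges c"
  by (rule cyc_edge[OF g], unfold add.assoc off_iff, use h in simp)+
lemma neq_o: assumes g: "good c" and h: "k1 mod 8 \<noteq> k2 mod 8"
  shows "cyc c (s+k1) \<noteq> cyc c (s+k2)"
  using cyc_inj[OF g] h off_iff by blast
lemma pic3_o: assumes g: "good c" and strc: "\<And>q. path_in_circuit V adj c q \<Longrightarrow> straight opp q"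
  and h: "(kb mod 8 = (ka+1) mod 8 \<and> ke mod 8 = (kb+1) mod 8) \<or> (ka mod 8 = (kb+1) mod 8 \<and> kb mod 8 = (ke+1) mod 8)"
  and n: "ka mod 8 \<noteq> ke mod 8"
  shows "opp (cyc c (s+kb)) (cyc c (s+ka)) (cyc c (s+ke))"
proof -
  have ad: "adj (cyc c (s+ka)) (cyc c (s+kb))" "adj (cyc c (s+kb)) (cyc c (s+ke))"
    using h adj_o[OF g] adj_sym by blast+
  have ed: "{cyc c (s+ka), cyc c (s+kb)} \<in> circ_edges c" "{cyc c (s+kb), cyc c (s+ke)} \<in> circ_edges c"
    using h edge_o[OF g] by blast+
  have ne: "cyc c (s+ka) \<noteq> cyc c (s+ke)" using neq_o[OF g n] .
  have pp: "is_path V adj [cyc c (s+ka), cyc c (s+kb), cyc c (s+ke)] 2" using ad ne cyc_V[OF g] by (simp add: path2)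
  have "path_in_circuit V adj c [cyc c (s+ka), cyc c (s+kb), cyc c (s+ke)]"
    unfolding path_in_circuit_def lens sl3 using pp ed cyc_mem[OF g] by auto
  hence "straight opp [cyc c (s+ka), cyc c (s+kb), cyc c (s+ke)]" by (rule strc)
  thus ?thesis by (simp add: str2)
qed

lemma extr5:
  assumes Hp: "is_path V adj [v0,v1,v2,v3,v4,v5] 5" and Hs: "straight opp [v0,v1,v2,v3,v4,v5]"
  shows "\<exists>u U. adj v5 u \<and> adj u U \<and> adj U v0 \<and> opp u v5 U \<and> opp v0 U v1 \<and> u \<noteq> v4"
proof -
  obtain c where sc: "straight_circuit V adj opp c 8" and pic: "path_in_circuit V adj c [v0,v1,v2,v3,v4,v5]"
    using vp3[OF Hp Hs] by blast
  have g: "good c" by (rule circ_good[OF sc])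
  have strc: "\<And>q. path_in_circuit V adj c q \<Longrightarrow> straight opp q" using sc unfolding straight_circuit_def by blast
  have E: "{v0,v1} \<in> circ_edges c" "{v1,v2} \<in> circ_edges c" "{v2,v3} \<in> circ_edges c"
    "{v3,v4} \<in> circ_edges c" "{v4,v5} \<in> circ_edges c"
    using pic unfolding path_in_circuit_def lens sl6 by simp_all
  have nb: "v0 \<noteq> v2" "v1 \<noteq> v3" "v2 \<noteq> v4" "v3 \<noteq> v5" using Hp by (simp_all add: path5)
  have "v0 \<in> set c" using pic unfolding path_in_circuit_def by simp
  then obtain i where i: "i < length c" "c!i = v0" by (auto simp: in_set_conv_nth)
  obtain s where s: "v0 = cyc c (s+0)"
  proof (cases "i = 8")
    case True
    hence "v0 = c!0" using i g unfolding good_def by simp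
    thus ?thesis using that[of 0] unfolding cyc_def by simp
  next
    case False
    hence "i < 8" using i g unfolding good_def by simp
    thus ?thesis using that[of i] i unfolding cyc_def by simp
  qed
  have "v1 = cyc c (s+1) \<or> v1 = cyc c (s+7)" using nbr_o[OF g, of s 0 v1 1 7] E(1) s by simp
  thus ?thesis
  proof
    assume h1: "v1 = cyc c (s+1)"
    have h2: "v2 = cyc c (s+2)" by (rule step_o[OF g, of s 1 v2 0]) (use E h1 s nb in simp_all)
    have h3: "v3 = cyc c (s+3)" by (rule step_o[OF g, of s 2 v3 1]) (use E h2 h1 nb in simp_all)
    have h4: "v4 = cyc c (s+4)" by (rule step_o[OF g, of s 3 v4 2]) (use E h3 h2 nb in simp_all)
    have h5: "v5 = cyc c (s+5)" by (rule step_o[OF g, of s 4 v5 3]) (use E h4 h3 nb in simp_all)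
    show ?thesis
    proof (intro exI conjI)
      show "adj v5 (cyc c (s+6))" using adj_o[OF g, of 6 5 s] h5 by simp
      show "adj (cyc c (s+6)) (cyc c (s+7))" using adj_o[OF g, of 7 6 s] by simp
      show "adj (cyc c (s+7)) v0" using adj_o[OF g, of 0 7 s] s by simp
      show "opp (cyc c (s+6)) v5 (cyc c (s+7))" using pic3_o[OF g strc, of 6 5 7 s] h5 by simp
      show "opp v0 (cyc c (s+7)) v1" using pic3_o[OF g strc, of 0 7 1 s] s h1 by simp
      show "cyc c (s+6) \<noteq> v4" using neq_o[OF g, of 6 4 s] h4 by simp
    qed
  next
    assume h1: "v1 = cyc c (s+7)"
    have h2: "v2 = cyc c (s+6)" by (rule stepb_o[OF g, of s 7 v2 0]) (use E h1 s nb in simp_all)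
    have h3: "v3 = cyc c (s+5)" by (rule stepb_o[OF g, of s 6 v3 7]) (use E h2 h1 nb in simp_all)
    have h4: "v4 = cyc c (s+4)" by (rule stepb_o[OF g, of s 5 v4 6]) (use E h3 h2 nb in simp_all)
    have h5: "v5 = cyc c (s+3)" by (rule stepb_o[OF g, of s 4 v5 5]) (use E h4 h3 nb in simp_all)
    show ?thesis
    proof (intro exI conjI)
      show "adj v5 (cyc c (s+2))" using adj_sym[OF adj_o[OF g, of 3 2 s]] h5 by simp
      show "adj (cyc c (s+2)) (cyc c (s+1))" using adj_sym[OF adj_o[OF g, of 2 1 s]] by simp
      show "adj (cyc c (s+1)) v0" using adj_sym[OF adj_o[OF g, of 1 0 s]] s by simp
      show "opp (cyc c (s+2)) v5 (cyc c (s+1))" using pic3_o[OF g strc, of 2 3 1 s] h5 by simp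
      show "opp v0 (cyc c (s+1)) v1" using pic3_o[OF g strc, of 0 1 7 s] s h1 by simp
      show "cyc c (s+2) \<noteq> v4" using neq_o[OF g, of 2 4 s] h4 by simp
    qed
  qed
qed

lemma opp_char: "opposite 4 V adj opp u v \<longleftrightarrow> (\<exists>x1 x2 x3. is_path V adj [u,x1,x2,x3,v] 4 \<and> straight opp [u,x1,x2,x3,v])"
proof
  assume "opposite 4 V adj opp u v"
  then obtain p where p: "is_path V adj p 4" "straight opp p" "hd p = u" "last p = v"
    unfolding opposite_def by blast
  hence "length p = 5" unfolding is_path_def by simp
  then obtain a b c d e where pe: "p = [a,b,c,d,e]" using len_split(4) by blast
  hence "a = u" "e = v" using p by simp_all
  hence "is_path V adj [u,b,c,d,v] 4 \<and> straight opp [u,b,c,d,v]" using p pe by simp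
  thus "\<exists>x1 x2 x3. is_path V adj [u,x1,x2,x3,v] 4 \<and> straight opp [u,x1,x2,x3,v]" by blast
next
  assume "\<exists>x1 x2 x3. is_path V adj [u,x1,x2,x3,v] 4 \<and> straight opp [u,x1,x2,x3,v]"
  then obtain x1 x2 x3 where "is_path V adj [u,x1,x2,x3,v] 4" "straight opp [u,x1,x2,x3,v]" by blast
  thus "opposite 4 V adj opp u v" unfolding opposite_def by (intro exI[of _ "[u,x1,x2,x3,v]"]) simp
qed

lemma opp_unfold: assumes "opposite 4 V adj opp u v"
  obtains L x N where "adj u L" "adj L x" "adj x N" "adj N v" "u \<noteq> x" "L \<noteq> N" "x \<noteq> v"
    "opp L u x" "opp x L N" "opp N x v"
  using assms unfolding opp_char path4 str4 by blast

lemma opp_intro: assumes "adj u L" "adj L x" "adj x N" "adj N v" "u \<noteq> x" "L \<noteq> N" "x \<noteq> v"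
    "opp L u x" "opp x L N" "opp N x v"
  shows "opposite 4 V adj opp u v"
  unfolding opp_char path4 str4 using assms adjV by blast

lemma opp_rev: assumes "opposite 4 V adj opp u v" shows "opposite 4 V adj opp v u"
proof -
  obtain L x N where h: "adj u L" "adj L x" "adj x N" "adj N v" "u \<noteq> x" "L \<noteq> N" "x \<noteq> v"
    "opp L u x" "opp x L N" "opp N x v" using opp_unfold[OF assms] by blast
  have V: "L \<in> V" "x \<in> V" "N \<in> V" using h adjV by blast+
  show ?thesis
    by (rule opp_intro[of v N x L u]) (use h V adj_sym opp_sym in auto)
qed

lemma claim:
  assumes aP: "a \<in> P" and bP: "b \<in> P" and nab: "\<not> coll adj a b" and nop: "\<not> opposite 4 V adj opp a b"
    and aL: "adj a L" and Lx: "adj L x" and xM: "adj x M" and Mb: "adj M b"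
    and oK: "opp a K L" and Kc: "adj K c" and ca: "c \<noteq> a"
  shows "coll adj c b"
proof -
  have aV: "a \<in> V" using aP PV by blast
  have aK: "adj a K" using opp_adj[OF aV oK] by blast
  have LP: "L \<notin> P" using bip[OF aL] aP by simp
  have xP: "x \<in> P" using bip[OF Lx] LP by simp
  have MP: "M \<notin> P" using bip[OF xM] xP by simp
  have KP: "K \<notin> P" using bip[OF aK] aP by simp
  have cP: "c \<in> P" using bip[OF Kc] KP by simp
  have ax: "a \<noteq> x" using nab xM Mb unfolding coll_def by blast
  have xb: "x \<noteq> b" using nab aL Lx unfolding coll_def by blast
  have xV: "x \<in> V" using xP PV by blast
  have cV: "c \<in> V" using cP PV by blast
  obtain N where xN: "adj x N" and oNL: "opp x N L" and oNM: "opp x N M"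
    using plump2[OF adj_sym[OF Lx] xM] by blast
  have NP: "N \<notin> P" using bip[OF xN] xP by simp
  have KL: "K \<noteq> L" using opp_irr[OF aV oK] .
  have LN: "L \<noteq> N" using opp_irr[OF xV oNL] by simp
  have MN: "M \<noteq> N" using opp_irr[OF xV oNM] by simp
  have p1: "is_path V adj [c,K,a,L,x,N] 5"
    unfolding path5 using adjV[OF Kc] adjV[OF aL] adjV[OF xN] xV adj_sym[OF Kc] adj_sym[OF aK] aL Lx xN ca KL ax LN by simp
  have s1: "straight opp [c,K,a,L,x,N]"
    unfolding str5 using triv[OF Kc KP adj_sym[OF aK] ca] oK triv[OF adj_sym[OF aL] LP Lx ax] opp_sym[OF xV oNL] by simp
  obtain y S where Ny: "adj N y" and yS: "adj y S" and Sc: "adj S c" and oyNS: "opp y N S" and ocSK: "opp c S K"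
    and yx: "y \<noteq> x" using extr5[OF p1 s1] by blast
  have yP: "y \<in> P" using bip[OF Ny] NP by simp
  have yV: "y \<in> V" using yP PV by blast
  have SP: "S \<notin> P" using bip[OF Sc] cP by simp
  have NS: "N \<noteq> S" using opp_irr[OF yV oyNS] .
  have SK: "S \<noteq> K" using opp_irr[OF cV ocSK] .
  have p2: "is_path V adj [b,M,x,N,y,S] 5"
    unfolding path5 using adjV[OF Mb] adjV[OF xN] adjV[OF yS] adj_sym[OF Mb] adj_sym[OF xM] xN Ny yS xb MN yx NS by auto
  have s2: "straight opp [b,M,x,N,y,S]"
    unfolding str5 using triv[OF Mb MP adj_sym[OF xM]] xb opp_sym[OF xV oNM]
      triv[OF adj_sym[OF xN] NP Ny] yx oyNS by auto
  obtain c' T where Sc': "adj S c'" and c'T: "adj c' T" and Tb: "adj T b" and oc'ST: "opp c' S T"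
    using extr5[OF p2 s2] by blast
  show ?thesis
  proof (cases "c' = c")
    case True thus ?thesis using c'T Tb unfolding coll_def by blast
  next
    case False
    have c'P: "c' \<in> P" using bip[OF Sc'] SP by simp
    have c'V: "c' \<in> V" using c'P PV by blast
    have ST: "S \<noteq> T" using opp_irr[OF c'V oc'ST] .
    have p3: "is_path V adj [a,K,c,S,c',T] 5"
      unfolding path5 using adjV[OF aK] adjV[OF Sc] adjV[OF c'T] aK Kc adj_sym[OF Sc] Sc' c'T ca SK False ST by auto
    have s3: "straight opp [a,K,c,S,c',T]"
      unfolding str5 using triv[OF adj_sym[OF aK] KP Kc] ca opp_sym[OF cV ocSK] triv[OF Sc SP Sc'] False oc'ST by auto
    obtain b' U where Tb': "adj T b'" and b'U: "adj b' U" and Ua: "adj U a" and ob'TU: "opp b' T U"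
      using extr5[OF p3 s3] by blast
    have TP: "T \<notin> P" using bip[OF Tb] bP by simp
    have UP: "U \<notin> P" using bip[OF Ua] aP by simp
    have b'P: "b' \<in> P" using bip[OF Tb'] TP by simp
    have b'V: "b' \<in> V" using b'P PV by blast
    have ab': "a \<noteq> b'" using nab Tb' Tb adj_sym unfolding coll_def by blast
    have b'b: "b' \<noteq> b" using nab Ua b'U adj_sym unfolding coll_def by blast
    have TU: "T \<noteq> U" using opp_irr[OF b'V ob'TU] .
    have "opposite 4 V adj opp a b"
      by (rule opp_intro[of a U b' T b])
        (use adj_sym[OF Ua] adj_sym[OF b'U] adj_sym[OF Tb'] Tb ab' TU b'b
          triv[OF Ua UP adj_sym[OF b'U]] opp_sym[OF b'V ob'TU] triv[OF Tb' TP Tb] in auto)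
    thus ?thesis using nop by blast
  qed
qed

lemma part1:
  assumes aP: "a \<in> P" and bP: "b \<in> P" and nab: "\<not> coll adj a b" and nop: "\<not> opposite 4 V adj opp a b"
    and aL: "adj a L" and Lx: "adj L x" and xM: "adj x M" and Mb: "adj M b"
    and cK: "adj c K" and Ka: "adj K a" and ca: "c \<noteq> a"
  shows "coll adj c b"
proof -
  obtain K' where aK': "adj a K'" and o1: "opp a K' K" and o2: "opp a K' L"
    using plump2[OF adj_sym[OF Ka] aL] by blast
  have aV: "a \<in> V" using aP PV by blast
  have K'V: "K' \<in> V" using adjV[OF aK'] by blast
  obtain c2 where K'c2: "adj K' c2" and o3: "opp K' c2 a" using plump1[OF adj_sym[OF aK']] by blast
  have c2a: "c2 \<noteq> a" using opp_irr[OF K'V o3] .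
  have "coll adj c2 b" by (rule claim[OF aP bP nab nop aL Lx xM Mb o2 K'c2 c2a])
  then obtain T where c2T: "adj c2 T" and Tb: "adj T b" unfolding coll_def by blast
  show ?thesis by (rule claim[OF aP bP nab nop aK' K'c2 c2T Tb opp_sym[OF aV o1] adj_sym[OF cK] ca])
qed

lemma tri: assumes uP: "u \<in> P" and o: "opposite 4 V adj opp u v" shows "\<not> coll adj u v"
proof
  assume "coll adj u v"
  then obtain R where uR: "adj u R" and Rv: "adj R v" unfolding coll_def by blast
  obtain L x N where h: "adj u L" "adj L x" "adj x N" "adj N v" "u \<noteq> x" "L \<noteq> N" "x \<noteq> v"
    "opp L u x" "opp x L N" "opp N x v" using opp_unfold[OF o] by blast
  have uv: "u \<noteq> v"
  proof
    assume "u = v"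
    thus False using no4[OF h(1) h(2) h(3)] h(4) h(5) h(6) by blast
  qed
  have vV: "v \<in> V" using adjV[OF Rv] by blast
  have uV: "u \<in> V" using adjV[OF uR] by blast
  have xV: "x \<in> V" using adjV[OF h(3)] by blast
  obtain R' where vR': "adj v R'" and o1: "opp v R' N" and o2: "opp v R' R"
    using plump2[OF adj_sym[OF h(4)] adj_sym[OF Rv]] by blast
  have NR': "N \<noteq> R'" using opp_irr[OF vV o1] by simp
  have RR': "R \<noteq> R'" using opp_irr[OF vV o2] by simp
  have p: "is_path V adj [u,L,x,N,v,R'] 5"
    unfolding path5 using h adjV[OF vR'] adjV[OF h(1)] adjV[OF h(3)] uV xV vV vR' NR' by auto
  have s: "straight opp [u,L,x,N,v,R']"
    unfolding str5 using h opp_sym[OF vV o1] by auto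
  obtain w W where R'w: "adj R' w" and wW: "adj w W" and Wu: "adj W u" and o3: "opp w R' W" and wv: "w \<noteq> v"
    using extr5[OF p s] by blast
  have wV: "w \<in> V" using adjV[OF wW] by blast
  have RP: "R \<notin> P" using bip[OF uR] uP by simp
  have WP: "W \<notin> P" using bip[OF Wu] uP by simp
  have uw: "u \<noteq> w"
  proof
    assume "u = w"
    thus False using no4[OF uR Rv vR'] R'w uv RR' by blast
  qed
  have WR': "W \<noteq> R'" using opp_irr[OF wV o3] by simp
  have p1: "is_path V adj [u,R,v,R'] 3"
    unfolding path3 using uR Rv vR' adjV[OF Rv] adjV[OF vR'] uV uv RR' by auto
  have s1: "straight opp [u,R,v,R']"
    unfolding str3 using triv[OF adj_sym[OF uR] RP Rv uv] opp_sym[OF vV o2] by simp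
  have p2: "is_path V adj [u,W,w,R'] 3"
    unfolding path3 using adj_sym[OF Wu] adj_sym[OF wW] adj_sym[OF R'w] adjV[OF wW] adjV[OF R'w] uV uw WR' by auto
  have s2: "straight opp [u,W,w,R']"
    unfolding str3 using triv[OF Wu WP adj_sym[OF wW] uw] opp_sym[OF wV o3] by simp
  have "[u,W,w,R'] = [u,R,v,R']" by (rule vp2[OF _ _ p1 s1 _ p2 s2]) simp_all
  thus False using wv by simp
qed

lemma part2:
  assumes aP: "a \<in> P" and bP: "b \<in> P" and nop: "\<not> opposite 4 V adj opp a b"
    and tw: "\<And>u. u \<noteq> a \<and> coll adj u a \<Longrightarrow> u \<noteq> b \<and> coll adj u b"
    and tw2: "\<And>u. u \<noteq> b \<and> coll adj u b \<Longrightarrow> u \<noteq> a \<and> coll adj u a"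
    and oy: "opposite 4 V adj opp a y"
  shows "opposite 4 V adj opp b y"
proof (rule ccontr)
  assume nb: "\<not> opposite 4 V adj opp b y"
  obtain L x N where h: "adj a L" "adj L x" "adj x N" "adj N y" "a \<noteq> x" "L \<noteq> N" "x \<noteq> y"
    "opp L a x" "opp x L N" "opp N x y" using opp_unfold[OF oy] by blast
  have LP: "L \<notin> P" using bip[OF h(1)] aP by simp
  have xP: "x \<in> P" using bip[OF h(2)] LP by simp
  have NP: "N \<notin> P" using bip[OF h(3)] xP by simp
  have yP: "y \<in> P" using bip[OF h(4)] NP by simp
  have LV: "L \<in> V" using adjV[OF h(1)] by blast
  have "x \<noteq> a \<and> coll adj x a" using h adj_sym unfolding coll_def by blast
  hence "x \<noteq> b \<and> coll adj x b" by (rule tw)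
  then obtain M where xM: "adj x M" and Mb: "adj M b" unfolding coll_def by blast
  have yb: "y \<noteq> b" using oy nop by blast
  have nby: "\<not> coll adj b y"
  proof
    assume "coll adj b y"
    hence "y \<noteq> b \<and> coll adj y b" using yb coll_sym by blast
    hence "coll adj y a" using tw2 by blast
    thus False using tri[OF aP oy] coll_sym by blast
  qed
  obtain c where Lc: "adj L c" and o1: "opp L c a" and o2: "opp L c x"
    using plump2[OF adj_sym[OF h(1)] h(2)] by blast
  have ca: "c \<noteq> a" using opp_irr[OF LV o1] .
  have cx: "c \<noteq> x" using opp_irr[OF LV o2] .
  have cP: "c \<in> P" using bip[OF Lc] LP by simp
  have "c \<noteq> a \<and> coll adj c a" using ca Lc h(1) adj_sym unfolding coll_def by blast
  hence "c \<noteq> b \<and> coll adj c b" by (rule tw)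
  then obtain T where cT: "adj c T" and Tb: "adj T b" unfolding coll_def by blast
  have "coll adj c y"
    by (rule part1[OF bP yP nby nb adj_sym[OF Mb] adj_sym[OF xM] h(3) h(4) cT Tb]) (use \<open>c \<noteq> b \<and> coll adj c b\<close> in blast)
  moreover have "opposite 4 V adj opp c y"
    by (rule opp_intro[of c L x N y]) (use adj_sym[OF Lc] h cx o2 in auto)
  ultimately show False using tri[OF cP] by blast
qed

end

theorem proposition3p7:
  fixes V :: "'v set" and adj :: "'v \<Rightarrow> 'v \<Rightarrow> bool" and opp :: "'v \<Rightarrow> 'v \<Rightarrow> 'v \<Rightarrow> bool"
    and P :: "'v set" and a b :: 'v
  assumes "green_quadrangle V adj opp P"
    and "a \<in> P" and "b \<in> P"
    and "gdist V adj a b = 4"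
    and "\<not> opposite 4 V adj opp a b"
  shows "opp_set 4 V adj opp a = opp_set 4 V adj opp b \<and> sphere V adj 2 a = sphere V adj 2 b"
proof -
  interpret GQ V adj opp P using assms(1) by (simp add: GQ_def)
  have aP: "a \<in> P" and bP: "b \<in> P" using assms by simp_all
  have aV: "a \<in> V" and bV: "b \<in> V" using aP bP PV by blast+
  have nab: "\<not> coll adj a b" using gd4[OF assms(4) aV bV] by blast
  obtain L x M where aL: "adj a L" and Lx: "adj L x" and xM: "adj x M" and Mb: "adj M b"
    using gd4[OF assms(4) aV bV] by blast
  have nop: "\<not> opposite 4 V adj opp a b" using assms(5) .
  have nba: "\<not> coll adj b a" using nab coll_sym by blast
  have nop2: "\<not> opposite 4 V adj opp b a" using nop opp_rev by blast
  have tw: "u \<noteq> b \<and> coll adj u b" if H: "u \<noteq> a \<and> coll adj u a" for u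
  proof -
    obtain K where uK: "adj u K" and Ka: "adj K a" using H unfolding coll_def by blast
    have "coll adj u b" using part1[OF aP bP nab nop aL Lx xM Mb uK Ka] H by blast
    moreover have "u \<noteq> b" using H nba by blast
    ultimately show ?thesis by blast
  qed
  have tw2: "u \<noteq> a \<and> coll adj u a" if H: "u \<noteq> b \<and> coll adj u b" for u
  proof -
    obtain K where uK: "adj u K" and Kb: "adj K b" using H unfolding coll_def by blast
    have "coll adj u a"
      using part1[OF bP aP nba nop2 adj_sym[OF Mb] adj_sym[OF xM] adj_sym[OF Lx] adj_sym[OF aL] uK Kb] H by blast
    moreover have "u \<noteq> a" using H nab by blast
    ultimately show ?thesis by blast
  qed
  have "sphere V adj 2 a = sphere V adj 2 b"
    using tw tw2 sphere2[OF aP] sphere2[OF bP] by blast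
  moreover have "opp_set 4 V adj opp a = opp_set 4 V adj opp b"
  proof (rule set_eqI)
    fix y
    show "y \<in> opp_set 4 V adj opp a \<longleftrightarrow> y \<in> opp_set 4 V adj opp b"
      unfolding opp_set_def using part2[OF aP bP nop tw tw2] part2[OF bP aP nop2 tw2 tw] by blast
  qed
  ultimately show ?thesis by blast
qed

end
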